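(* Let $U\subseteq\mathbb{R}^8$ be open, let $\Theta\in C^\infty(U)$ satisfy the 4+4-dimensional TED equation $$\omega_{12}\omega_{34}+\omega_{23}\omega_{14}+\omega_{31}\omega_{24}=0\quad\text{on }U,$$ and assume $\omega_{12}\neq 0$ on $U$. Fix a constant $\lambda$ and put $D_i=\partial_{y^i}-\lambda\partial_{x^i}$ for $i=1,\dots,4$. Define the first-order operators $$X_3=\omega_{23}D_1+\omega_{31}D_2+\omega_{12}D_3,\qquad X_4=\omega_{24}D_1+\omega_{41}D_2+\omega_{12}D_4 .$$ The Lax pair $X_3\psi=0$, $X_4\psi=0$, written out as $$(\Theta_{x^1y^2}-\Theta_{x^2y^1})(\psi_{y^3}-\lambda\psi_{x^3})+(\Theta_{x^2y^3}-\Theta_{x^3y^2})(\psi_{y^1}-\lambda\psi_{x^1})+(\Theta_{x^3y^1}-\Theta_{x^1y^3})(\psi_{y^2}-\lambda\psi_{x^2})=0,$$ $$(\Theta_{x^1y^2}-\Theta_{x^2y^1})(\psi_{y^4}-\lambda\psi_{x^4})+(\Theta_{x^2y^4}-\Theta_{x^4y^2})(\psi_{y^1}-\lambda\psi_{x^1})+(\Theta_{x^4y^1}-\Theta_{x^1y^4})(\psi_{y^2}-\lambda\psi_{x^2})=0,$$ is then compatible. Precisely: there are smooth functions $\alpha,\beta$ on $U$ with $[X_3,X_4]=\alpha X_3+\beta X_4$.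
   Context: Coordinates on $\mathbb{R}^8$ are $(x^1,\dots,x^4,y^1,\dots,y^4)$, and subscripts denote partial derivatives. For $\Theta\in C^\infty(U)$ set $\omega_{ik}=\Theta_{x^iy^k}-\Theta_{x^ky^i}$, so that $\omega_{ik}=-\omega_{ki}$. The 4+4-dimensional TED equation is $\omega_{12}\omega_{34}+\omega_{23}\omega_{14}+\omega_{31}\omega_{24}=0$, i.e. the vanishing of the Pfaffian of the skew-symmetric $4\times4$ matrix $\omega=(\omega_{ik})$. *)

theory Defs
  imports "HOL-Analysis.Analysis"
begin

text \<open>Points of R^8 are pairs (x, y) with x, y :: real^4; coordinates x^i = x $ i,
  y^i = y $ i for i = 1,2,3,4 (elements of the index type 4; note (4::4) = 0,
  which is just a fourth label distinct from 1, 2, 3).\<close>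

type_synonym pt = "(real^4) \<times> (real^4)"

definition dd :: "'a::real_normed_vector \<Rightarrow> ('a \<Rightarrow> real) \<Rightarrow> 'a \<Rightarrow> real" where
  "dd v f p = deriv (\<lambda>t. f (p + t *\<^sub>R v)) 0"

fun iter_dd :: "'a::real_normed_vector list \<Rightarrow> ('a \<Rightarrow> real) \<Rightarrow> 'a \<Rightarrow> real" where
  "iter_dd [] f = f"
| "iter_dd (v # vs) f = dd v (iter_dd vs f)"

definition smooth_on :: "'a::euclidean_space set \<Rightarrow> ('a \<Rightarrow> real) \<Rightarrow> bool" where
  "smooth_on U f \<longleftrightarrow>
     (\<forall>vs. set vs \<subseteq> Basis \<longrightarrow>
        continuous_on U (iter_dd vs f) \<and>
        (\<forall>v\<in>Basis. \<forall>p\<in>U. (\<lambda>t. iter_dd vs f (p + t *\<^sub>R v)) differentiable (at 0)))"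

definition px :: "4 \<Rightarrow> (pt \<Rightarrow> real) \<Rightarrow> pt \<Rightarrow> real" where
  "px i f = dd (axis i 1, 0) f"

definition py :: "4 \<Rightarrow> (pt \<Rightarrow> real) \<Rightarrow> pt \<Rightarrow> real" where
  "py i f = dd (0, axis i 1) f"

definition omega :: "(pt \<Rightarrow> real) \<Rightarrow> 4 \<Rightarrow> 4 \<Rightarrow> pt \<Rightarrow> real" where
  "omega \<Theta> i k p = px i (py k \<Theta>) p - px k (py i \<Theta>) p"

definition TED :: "(pt \<Rightarrow> real) \<Rightarrow> pt \<Rightarrow> bool" where
  "TED \<Theta> p \<longleftrightarrow>
     omega \<Theta> 1 2 p * omega \<Theta> 3 4 p + omega \<Theta> 2 3 p * omega \<Theta> 1 4 p
     + omega \<Theta> 3 1 p * omega \<Theta> 2 4 p = 0"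

definition Dop :: "real \<Rightarrow> 4 \<Rightarrow> (pt \<Rightarrow> real) \<Rightarrow> pt \<Rightarrow> real" where
  "Dop lam i \<psi> p = py i \<psi> p - lam * px i \<psi> p"

definition X3 :: "(pt \<Rightarrow> real) \<Rightarrow> real \<Rightarrow> (pt \<Rightarrow> real) \<Rightarrow> pt \<Rightarrow> real" where
  "X3 \<Theta> lam \<psi> p = omega \<Theta> 2 3 p * Dop lam 1 \<psi> p + omega \<Theta> 3 1 p * Dop lam 2 \<psi> p
                   + omega \<Theta> 1 2 p * Dop lam 3 \<psi> p"

definition X4 :: "(pt \<Rightarrow> real) \<Rightarrow> real \<Rightarrow> (pt \<Rightarrow> real) \<Rightarrow> pt \<Rightarrow> real" where
  "X4 \<Theta> lam \<psi> p = omega \<Theta> 2 4 p * Dop lam 1 \<psi> p + omega \<Theta> 4 1 p * Dop lam 2 \<psi> p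
                   + omega \<Theta> 1 2 p * Dop lam 4 \<psi> p"

end

theory Submission
  imports Defs
begin

definition dif :: "'a::real_normed_vector \<Rightarrow> ('a \<Rightarrow> real) \<Rightarrow> 'a \<Rightarrow> bool" where
  "dif v f p \<longleftrightarrow> (\<lambda>t. f (p + t *\<^sub>R v)) differentiable (at 0)"

lemma dd_DERIV: "dif v f p \<Longrightarrow> ((\<lambda>t. f (p + t *\<^sub>R v)) has_real_derivative dd v f p) (at 0)"
  unfolding dif_def dd_def using DERIV_deriv_iff_real_differentiable by blast

lemma dd_eqI: "((\<lambda>t. f (p + t *\<^sub>R v)) has_real_derivative D) (at 0) \<Longrightarrow> dd v f p = D"
  unfolding dd_def by (rule DERIV_imp_deriv)

lemma difI: "((\<lambda>t. f (p + t *\<^sub>R v)) has_real_derivative D) (at 0) \<Longrightarrow> dif v f p"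
  unfolding dif_def using real_differentiable_def by blast

lemma dd_add: "dif v f p \<Longrightarrow> dif v g p \<Longrightarrow> dd v (\<lambda>q. f q + g q) p = dd v f p + dd v g p"
  by (rule dd_eqI) (intro DERIV_add dd_DERIV)
lemma dif_add: "dif v f p \<Longrightarrow> dif v g p \<Longrightarrow> dif v (\<lambda>q. f q + g q) p"
  by (rule difI) (rule DERIV_add; rule dd_DERIV; assumption)
lemma dd_mult: "dif v f p \<Longrightarrow> dif v g p \<Longrightarrow> dd v (\<lambda>q. f q * g q) p = f p * dd v g p + dd v f p * g p"
  by (rule dd_eqI) (rule DERIV_mult'[THEN DERIV_cong], (rule dd_DERIV, assumption)+, simp)
lemma dif_mult: "dif v f p \<Longrightarrow> dif v g p \<Longrightarrow> dif v (\<lambda>q. f q * g q) p"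
  by (rule difI) (rule DERIV_mult', (rule dd_DERIV, assumption)+)
lemma dd_const: "dd v (\<lambda>q. c) p = 0"
  by (rule dd_eqI) simp
lemma dif_const: "dif v (\<lambda>q. c) p"
  by (rule difI) (rule DERIV_const)
lemma dd_inv: "dif v f p \<Longrightarrow> f p \<noteq> 0 \<Longrightarrow> dd v (\<lambda>q. 1 / f q) p = (-1) * dd v f p * (1 / f p) * (1 / f p)"
  apply (rule dd_eqI)
  apply (rule DERIV_cong)
   apply (rule DERIV_divide[OF DERIV_const dd_DERIV])
  by (auto simp: power2_eq_square field_simps)
lemma dif_inv: "dif v f p \<Longrightarrow> f p \<noteq> 0 \<Longrightarrow> dif v (\<lambda>q. 1 / f q) p"
  apply (rule difI)
   apply (rule DERIV_divide[OF DERIV_const dd_DERIV])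
  by (auto)

lemma ev_in_open:
  fixes p v :: "'a::real_normed_vector"
  assumes "open U" "p \<in> U"
  shows "eventually (\<lambda>t. p + t *\<^sub>R v \<in> U) (nhds (0::real))"
proof -
  have "continuous (at 0) (\<lambda>t::real. p + t *\<^sub>R v)" by (intro continuous_intros)
  hence "((\<lambda>t::real. p + t *\<^sub>R v) \<longlongrightarrow> p) (nhds 0)"
    by (metis (no_types, lifting) add.right_neutral continuous_within scaleR_zero_left tendsto_nhds_iff
        isCont_def)
  thus ?thesis using assms topological_tendstoD by blast
qed

lemma dd_local:
  assumes "open U" "p \<in> U" "\<forall>q\<in>U. f q = g q"
  shows "dd v f p = dd v g p"
  unfolding dd_def
  by (rule deriv_cong_ev[OF _ refl]) (use ev_in_open[OF assms(1,2), of v] assms(3) in \<open>auto elim: eventually_mono\<close>)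

lemma dif_local:
  assumes "open U" "p \<in> U" "\<forall>q\<in>U. f q = g q" "dif v f p"
  shows "dif v g p"
proof -
  have "((\<lambda>t. g (p + t *\<^sub>R v)) has_real_derivative dd v f p) (at 0)"
    using dd_DERIV[OF assms(4)]
    by (subst DERIV_cong_ev[OF refl _ refl]) (use ev_in_open[OF assms(1,2), of v] assms(3) in \<open>auto elim: eventually_mono\<close>)
  thus ?thesis by (rule difI)
qed

lemma iter_dd_local:
  assumes "open U" "\<forall>q\<in>U. f q = g q"
  shows "\<forall>q\<in>U. iter_dd vs f q = iter_dd vs g q"
  using assms by (induction vs) (auto intro: dd_local)

lemma iter_dd_append: "iter_dd (vs @ ws) f = iter_dd vs (iter_dd ws f)"
  by (induction vs) auto

definition good :: "'a::euclidean_space set \<Rightarrow> ('a \<Rightarrow> real) \<Rightarrow> bool" where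
  "good U h \<longleftrightarrow> continuous_on U h \<and> (\<forall>v\<in>Basis. \<forall>p\<in>U. dif v h p)"

definition sm :: "nat \<Rightarrow> 'a::euclidean_space set \<Rightarrow> ('a \<Rightarrow> real) \<Rightarrow> bool" where
  "sm n U f \<longleftrightarrow> (\<forall>vs. set vs \<subseteq> Basis \<longrightarrow> length vs \<le> n \<longrightarrow> good U (iter_dd vs f))"

lemma smooth_sm: "smooth_on U f \<Longrightarrow> sm n U f"
  unfolding smooth_on_def sm_def good_def dif_def by blast

lemma sm_smooth: "(\<And>n. sm n U f) \<Longrightarrow> smooth_on U f"
  unfolding smooth_on_def sm_def good_def dif_def by (meson order_refl)

lemma good_cong:
  assumes "open U" "\<forall>q\<in>U. h q = h' q" "good U h"
  shows "good U h'"
proof -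
  have "continuous_on U h'" using assms unfolding good_def
    using continuous_on_cong[of U U h h'] by simp
  moreover have "\<forall>v\<in>Basis. \<forall>p\<in>U. dif v h' p"
    using assms unfolding good_def using dif_local[OF assms(1) _ assms(2)] by blast
  ultimately show ?thesis unfolding good_def by blast
qed

lemma sm_0I: "good U h \<Longrightarrow> sm 0 U h"
  unfolding sm_def by auto

lemma sm_cong:
  assumes "open U" "\<forall>q\<in>U. f q = g q" "sm n U f"
  shows "sm n U g"
  unfolding sm_def
proof (intro allI impI)
  fix vs :: "'a list" assume "set vs \<subseteq> Basis" "length vs \<le> n"
  hence "good U (iter_dd vs f)" using assms(3) unfolding sm_def by blast
  thus "good U (iter_dd vs g)" using good_cong[OF assms(1) iter_dd_local[OF assms(1,2), of vs]] by blast
qed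

lemma sm_mono: "m \<le> n \<Longrightarrow> sm n U f \<Longrightarrow> sm m U f"
  unfolding sm_def by auto

lemma sm_good: "sm n U f \<Longrightarrow> good U f"
  unfolding sm_def by (metis empty_subsetI iter_dd.simps(1) le0 list.size(3) set_empty)

lemma sm_dif: "sm n U f \<Longrightarrow> v \<in> Basis \<Longrightarrow> p \<in> U \<Longrightarrow> dif v f p"
  using sm_good good_def by blast

lemma sm_cont: "sm n U f \<Longrightarrow> continuous_on U f"
  using sm_good good_def by blast

lemma sm_dd: "sm (Suc n) U f \<Longrightarrow> v \<in> Basis \<Longrightarrow> sm n U (dd v f)"
  unfolding sm_def
proof (intro allI impI)
  fix vs :: "'a list" assume A: "\<forall>vs. set vs \<subseteq> Basis \<longrightarrow> length vs \<le> Suc n \<longrightarrow> good U (iter_dd vs f)"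
    "v \<in> Basis" "set vs \<subseteq> Basis" "length vs \<le> n"
  have "good U (iter_dd (vs @ [v]) f)" using A by auto
  thus "good U (iter_dd vs (dd v f))" by (simp add: iter_dd_append)
qed

lemma sm_SucI:
  assumes "open U" "good U h"
    and "\<And>v. v \<in> Basis \<Longrightarrow> \<exists>h'. (\<forall>q\<in>U. dd v h q = h' q) \<and> sm n U h'"
  shows "sm (Suc n) U h"
  unfolding sm_def
proof (intro allI impI)
  fix vs :: "'a list" assume vs: "set vs \<subseteq> Basis" "length vs \<le> Suc n"
  show "good U (iter_dd vs h)"
  proof (cases vs rule: rev_exhaust)
    case Nil thus ?thesis using assms(2) by simp
  next
    case (snoc ws v)
    with vs have v: "v \<in> Basis" and ws: "set ws \<subseteq> Basis" "length ws \<le> n" by auto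
    obtain h' where h': "\<forall>q\<in>U. dd v h q = h' q" "sm n U h'" using assms(3)[OF v] by blast
    have "good U (iter_dd ws h')" using h'(2) ws unfolding sm_def by blast
    moreover have "\<forall>q\<in>U. iter_dd ws h' q = iter_dd ws (dd v h) q"
      using iter_dd_local[OF assms(1)] h'(1) by metis
    ultimately have "good U (iter_dd ws (dd v h))" using good_cong[OF assms(1)] by blast
    thus ?thesis using snoc by (simp add: iter_dd_append)
  qed
qed

lemma iter_dd_const: "\<exists>k. iter_dd vs (\<lambda>q. c) = (\<lambda>q. k)"
proof (induction vs)
  case Nil thus ?case by auto
next
  case (Cons v vs)
  then obtain k where "iter_dd vs (\<lambda>q. c) = (\<lambda>q. k)" by blast
  thus ?case by (auto simp: dd_const[abs_def])
qed

lemma sm_const: "sm n U (\<lambda>q. c)"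
  unfolding sm_def
proof (intro allI impI)
  fix vs :: "'a list"
  obtain k where "iter_dd vs (\<lambda>q. c) = (\<lambda>q. k)" using iter_dd_const by blast
  thus "good U (iter_dd vs (\<lambda>q. c))" unfolding good_def by (simp add: dif_const)
qed

lemma sm_add: "open U \<Longrightarrow> sm n U f \<Longrightarrow> sm n U g \<Longrightarrow> sm n U (\<lambda>q. f q + g q)"
proof (induction n arbitrary: f g)
  case 0
  hence "good U (\<lambda>q. f q + g q)" unfolding good_def
    by (auto intro!: continuous_on_add[OF sm_cont sm_cont] dif_add[OF sm_dif sm_dif])
  thus ?case by (rule sm_0I)
next
  case (Suc n)
  show ?case
  proof (rule sm_SucI[OF Suc.prems(1)])
    show "good U (\<lambda>q. f q + g q)" unfolding good_def using Suc.prems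
      by (auto intro!: continuous_on_add[OF sm_cont sm_cont] dif_add[OF sm_dif sm_dif])
    fix v :: 'a assume v: "v \<in> Basis"
    show "\<exists>h'. (\<forall>q\<in>U. dd v (\<lambda>q. f q + g q) q = h' q) \<and> sm n U h'"
      by (rule exI[of _ "\<lambda>q. dd v f q + dd v g q"])
         (use Suc v in \<open>auto intro!: dd_add sm_dif sm_dd\<close>)
  qed
qed

lemma sm_mult: "open U \<Longrightarrow> sm n U f \<Longrightarrow> sm n U g \<Longrightarrow> sm n U (\<lambda>q. f q * g q)"
proof (induction n arbitrary: f g)
  case 0
  hence "good U (\<lambda>q. f q * g q)" unfolding good_def
    by (auto intro!: continuous_on_mult[OF sm_cont sm_cont] dif_mult[OF sm_dif sm_dif])
  thus ?case by (rule sm_0I)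
next
  case (Suc n)
  show ?case
  proof (rule sm_SucI[OF Suc.prems(1)])
    show "good U (\<lambda>q. f q * g q)" unfolding good_def using Suc.prems
      by (auto intro!: continuous_on_mult[OF sm_cont sm_cont] dif_mult[OF sm_dif sm_dif])
    fix v :: 'a assume v: "v \<in> Basis"
    have "sm n U f" "sm n U g" using Suc.prems sm_mono by (metis le_SucI order_refl)+
    hence "sm n U (\<lambda>q. f q * dd v g q + dd v f q * g q)"
      using Suc v by (intro sm_add Suc.IH sm_dd) auto
    thus "\<exists>h'. (\<forall>q\<in>U. dd v (\<lambda>q. f q * g q) q = h' q) \<and> sm n U h'"
      using Suc v by (intro exI[of _ "\<lambda>q. f q * dd v g q + dd v f q * g q"]) (auto intro!: dd_mult sm_dif)
  qed
qed

lemma sm_inv: "open U \<Longrightarrow> sm n U f \<Longrightarrow> \<forall>q\<in>U. f q \<noteq> 0 \<Longrightarrow> sm n U (\<lambda>q. 1 / f q)"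
proof (induction n arbitrary: f)
  case 0
  hence "good U (\<lambda>q. 1 / f q)" unfolding good_def
    by (auto intro!: continuous_on_divide[OF continuous_on_const sm_cont] dif_inv[OF sm_dif])
  thus ?case by (rule sm_0I)
next
  case (Suc n)
  show ?case
  proof (rule sm_SucI[OF Suc.prems(1)])
    show "good U (\<lambda>q. 1 / f q)" unfolding good_def using Suc.prems
      by (auto intro!: continuous_on_divide[OF continuous_on_const sm_cont] dif_inv[OF sm_dif])
    fix v :: 'a assume v: "v \<in> Basis"
    have f: "sm n U f" using Suc.prems sm_mono by (metis le_SucI order_refl)
    have i: "sm n U (\<lambda>q. 1 / f q)" using Suc.IH[OF Suc.prems(1) f Suc.prems(3)] .
    have "sm n U (\<lambda>q. (-1) * dd v f q * (1 / f q) * (1 / f q))"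
      using Suc v i by (intro sm_mult sm_const sm_dd) auto
    moreover have "\<forall>q\<in>U. dd v (\<lambda>q. 1 / f q) q = (-1) * dd v f q * (1 / f q) * (1 / f q)"
    proof
      fix q assume q: "q \<in> U"
      show "dd v (\<lambda>q. 1 / f q) q = (-1) * dd v f q * (1 / f q) * (1 / f q)"
        by (rule dd_inv[OF sm_dif[OF Suc.prems(2) v q]]) (use Suc.prems(3) q in blast)
    qed
    ultimately show "\<exists>h'. (\<forall>q\<in>U. dd v (\<lambda>q. 1 / f q) q = h' q) \<and> sm n U h'"
      by (intro exI[of _ "\<lambda>q. (-1) * dd v f q * (1 / f q) * (1 / f q)"]) simp
  qed
qed

lemma smooth_add: "open U \<Longrightarrow> smooth_on U f \<Longrightarrow> smooth_on U g \<Longrightarrow> smooth_on U (\<lambda>q. f q + g q)"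
  by (rule sm_smooth, rule sm_add, assumption, (erule smooth_sm)+)
lemma smooth_mult: "open U \<Longrightarrow> smooth_on U f \<Longrightarrow> smooth_on U g \<Longrightarrow> smooth_on U (\<lambda>q. f q * g q)"
  by (rule sm_smooth, rule sm_mult, assumption, (erule smooth_sm)+)
lemma smooth_const: "smooth_on U (\<lambda>q. c)"
  by (rule sm_smooth, rule sm_const)
lemma smooth_inv: "open U \<Longrightarrow> smooth_on U f \<Longrightarrow> \<forall>q\<in>U. f q \<noteq> 0 \<Longrightarrow> smooth_on U (\<lambda>q. 1 / f q)"
  by (rule sm_smooth, rule sm_inv, assumption, erule smooth_sm, assumption)
lemma smooth_dd: "smooth_on U f \<Longrightarrow> v \<in> Basis \<Longrightarrow> smooth_on U (dd v f)"
  by (rule sm_smooth, rule sm_dd, erule smooth_sm, assumption)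
lemma smooth_diff: "open U \<Longrightarrow> smooth_on U f \<Longrightarrow> smooth_on U g \<Longrightarrow> smooth_on U (\<lambda>q. f q - g q)"
proof -
  assume a: "open U" "smooth_on U f" "smooth_on U g"
  have "smooth_on U (\<lambda>q. f q + (-1) * g q)" using a by (intro smooth_add smooth_mult smooth_const)
  thus ?thesis by simp
qed
lemma smooth_cong: "open U \<Longrightarrow> \<forall>q\<in>U. f q = g q \<Longrightarrow> smooth_on U f \<Longrightarrow> smooth_on U g"
  by (rule sm_smooth, rule sm_cong, assumption+, rule smooth_sm)

lemma DERIV_along:
  assumes "dif u f (p + s *\<^sub>R u)"
  shows "((\<lambda>s. f (p + s *\<^sub>R u)) has_real_derivative dd u f (p + s *\<^sub>R u)) (at s)"
proof -
  have D: "((\<lambda>t. f ((p + s *\<^sub>R u) + t *\<^sub>R u)) has_real_derivative dd u f (p + s *\<^sub>R u)) (at 0)"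
    using dd_DERIV[OF assms] .
  have e: "(\<lambda>t. f ((p + s *\<^sub>R u) + t *\<^sub>R u)) = (\<lambda>t. f (p + (t + s) *\<^sub>R u))"
    by (simp add: scaleR_add_left add_ac)
  have "((\<lambda>x. (\<lambda>s. f (p + s *\<^sub>R u)) (x + s)) has_real_derivative dd u f (p + s *\<^sub>R u)) (at 0)"
    using D e by simp
  hence "((\<lambda>s. f (p + s *\<^sub>R u)) has_real_derivative dd u f (p + s *\<^sub>R u)) (at (0 + s))"
    using DERIV_shift by blast
  thus ?thesis by simp
qed

lemma norm_two_le:
  fixes u v :: "'a::euclidean_space"
  assumes "u \<in> Basis" "v \<in> Basis" "0 \<le> s" "s \<le> h" "0 \<le> t" "t \<le> h"
  shows "dist p (p + s *\<^sub>R u + t *\<^sub>R v) \<le> 2 * h"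
proof -
  have "dist p (p + (s *\<^sub>R u + t *\<^sub>R v)) = norm (s *\<^sub>R u + t *\<^sub>R v)"
    using dist_norm[of "p + (s *\<^sub>R u + t *\<^sub>R v)" p] by (simp add: dist_commute)
  hence "dist p (p + s *\<^sub>R u + t *\<^sub>R v) = norm (s *\<^sub>R u + t *\<^sub>R v)"
    by (simp add: add.assoc)
  also have "\<dots> \<le> norm (s *\<^sub>R u) + norm (t *\<^sub>R v)" by (rule norm_triangle_ineq)
  also have "\<dots> = s + t" using assms by simp
  finally show ?thesis using assms by simp
qed

lemma mixed_mvt:
  fixes f :: "'a::euclidean_space \<Rightarrow> real"
  assumes U: "open U" "sm 2 U f" and uv: "u \<in> Basis" "v \<in> Basis" and h: "h > 0"
    and sub: "cball p (2*h) \<subseteq> U"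
  shows "\<exists>\<xi>\<in>cball p (2*h). f (p + h *\<^sub>R u + h *\<^sub>R v) - f (p + h *\<^sub>R u) - f (p + h *\<^sub>R v) + f p
            = h * h * dd v (dd u f) \<xi>"
proof -
  have inU: "p + s *\<^sub>R u + t *\<^sub>R v \<in> U" if "0 \<le> s" "s \<le> h" "0 \<le> t" "t \<le> h" for s t
    using norm_two_le[OF uv that, of p] sub by auto
  have inU': "p + t *\<^sub>R v + s *\<^sub>R u \<in> U" if "0 \<le> s" "s \<le> h" "0 \<le> t" "t \<le> h" for s t
    using inU[OF that] by (simp add: add_ac)
  have difu: "\<And>q. q \<in> U \<Longrightarrow> dif u f q" using U uv sm_dif by blast
  have s2: "sm (Suc 1) U f" using U(2) by (simp add: numeral_2_eq_2)
  have sm1: "sm 1 U (dd u f)" by (rule sm_dd[OF s2 uv(1)])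
  have difv: "\<And>q. q \<in> U \<Longrightarrow> dif v (dd u f) q" using sm1 uv sm_dif by blast
  define g where "g s = f ((p + h *\<^sub>R v) + s *\<^sub>R u) - f (p + s *\<^sub>R u)" for s
  have gD: "DERIV g s :> dd u f ((p + h *\<^sub>R v) + s *\<^sub>R u) - dd u f (p + s *\<^sub>R u)"
    if "0 \<le> s" "s \<le> h" for s
  proof -
    have a: "p + h *\<^sub>R v + s *\<^sub>R u \<in> U" using inU'[OF that, of h] h by simp
    have b: "p + s *\<^sub>R u \<in> U" using inU[OF that, of 0] h by simp
    show ?thesis unfolding g_def
      by (rule DERIV_diff[OF DERIV_along[OF difu[OF a]] DERIV_along[OF difu[OF b]]])
  qed
  from MVT2[OF h gD] obtain s1 where s1: "0 < s1" "s1 < h"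
    "g h - g 0 = (h - 0) * (dd u f ((p + h *\<^sub>R v) + s1 *\<^sub>R u) - dd u f (p + s1 *\<^sub>R u))"
    by blast
  define k where "k t = dd u f ((p + s1 *\<^sub>R u) + t *\<^sub>R v)" for t
  have kD: "DERIV k t :> dd v (dd u f) ((p + s1 *\<^sub>R u) + t *\<^sub>R v)" if "0 \<le> t" "t \<le> h" for t
  proof -
    have a: "p + s1 *\<^sub>R u + t *\<^sub>R v \<in> U" using inU[of s1 t] s1 that by simp
    show ?thesis unfolding k_def by (rule DERIV_along[OF difv[OF a]])
  qed
  from MVT2[OF h kD] obtain t1 where t1: "0 < t1" "t1 < h"
    "k h - k 0 = (h - 0) * dd v (dd u f) ((p + s1 *\<^sub>R u) + t1 *\<^sub>R v)"
    by blast
  have "f (p + h *\<^sub>R u + h *\<^sub>R v) - f (p + h *\<^sub>R u) - f (p + h *\<^sub>R v) + f p = g h - g 0"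
    unfolding g_def by (simp add: add_ac)
  also have "\<dots> = h * (k h - k 0)" using s1(3) unfolding k_def by (simp add: add_ac)
  also have "\<dots> = h * h * dd v (dd u f) ((p + s1 *\<^sub>R u) + t1 *\<^sub>R v)" using t1(3) by simp
  finally show ?thesis
    using norm_two_le[OF uv, of s1 h t1 p] s1 t1 by (intro bexI[of _ "p + s1 *\<^sub>R u + t1 *\<^sub>R v"]) auto
qed

lemma clairaut:
  fixes f :: "'a::euclidean_space \<Rightarrow> real"
  assumes U: "open U" "sm 2 U f" and uv: "u \<in> Basis" "v \<in> Basis" and p: "p \<in> U"
  shows "dd u (dd v f) p = dd v (dd u f) p"
proof (rule ccontr)
  assume ne: "dd u (dd v f) p \<noteq> dd v (dd u f) p"
  define A where "A = dd u (dd v f)"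
  define B where "B = dd v (dd u f)"
  define e where "e = \<bar>A p - B p\<bar> / 3"
  have e: "e > 0" using ne unfolding e_def A_def B_def by simp
  have s2: "sm (Suc (Suc 0)) U f" using U(2) by (simp add: numeral_2_eq_2)
  have cA: "continuous_on U A" unfolding A_def
    by (rule sm_cont[of 0], rule sm_dd[OF sm_dd[OF s2]]) (use uv in auto)
  have cB: "continuous_on U B" unfolding B_def
    by (rule sm_cont[of 0], rule sm_dd[OF sm_dd[OF s2]]) (use uv in auto)
  obtain dA where dA: "dA > 0" "\<forall>x'\<in>U. dist x' p < dA \<longrightarrow> dist (A x') (A p) < e"
    using cA p e unfolding continuous_on_iff by blast
  obtain dB where dB: "dB > 0" "\<forall>x'\<in>U. dist x' p < dB \<longrightarrow> dist (B x') (B p) < e"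
    using cB p e unfolding continuous_on_iff by blast
  obtain r where r: "r > 0" "ball p r \<subseteq> U" using U(1) p open_contains_ball by blast
  define d where "d = min r (min dA dB)"
  have d: "d > 0" using r dA dB unfolding d_def by simp
  define h where "h = d / 3"
  have h: "h > 0" using d unfolding h_def by simp
  have cb: "cball p (2*h) \<subseteq> ball p d" using d unfolding h_def by auto
  have "ball p d \<subseteq> ball p r" unfolding d_def by (rule subset_ball) simp
  hence sub: "cball p (2*h) \<subseteq> U" using cb r by blast
  obtain \<xi> where \<xi>: "\<xi> \<in> cball p (2*h)"
    "f (p + h *\<^sub>R u + h *\<^sub>R v) - f (p + h *\<^sub>R u) - f (p + h *\<^sub>R v) + f p = h * h * B \<xi>"
    using mixed_mvt[OF U uv h sub] unfolding B_def by blast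
  obtain \<eta> where \<eta>: "\<eta> \<in> cball p (2*h)"
    "f (p + h *\<^sub>R v + h *\<^sub>R u) - f (p + h *\<^sub>R v) - f (p + h *\<^sub>R u) + f p = h * h * A \<eta>"
    using mixed_mvt[OF U uv(2,1) h sub] unfolding A_def by blast
  have "p + h *\<^sub>R v + h *\<^sub>R u = p + h *\<^sub>R u + h *\<^sub>R v" by (simp add: add_ac)
  hence "h * h * A \<eta> = h * h * B \<xi>" using \<xi>(2) \<eta>(2) by (simp only:)
  hence AB: "A \<eta> = B \<xi>" using h by simp
  have "2 * h < d" using d unfolding h_def by simp
  hence "2 * h < dB" "2 * h < dA" unfolding d_def by auto
  hence "dist \<xi> p < dB" "dist \<eta> p < dA" "\<xi> \<in> U" "\<eta> \<in> U"
    using \<xi>(1) \<eta>(1) sub by (auto simp: dist_commute)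
  hence "\<bar>B \<xi> - B p\<bar> < e" "\<bar>A \<eta> - A p\<bar> < e" using dA dB by (auto simp: dist_real_def)
  hence "\<bar>A p - B p\<bar> < 2 * e" using AB by linarith
  thus False unfolding e_def by simp
qed

lemma dd_lin: "dif v f p \<Longrightarrow> dif v g p \<Longrightarrow> dd v (\<lambda>q. f q - c * g q) p = dd v f p - c * dd v g p"
  by (rule dd_eqI) (rule DERIV_diff; (rule DERIV_cmult)?; rule dd_DERIV; assumption)

lemma dd_neg: "dif v f p \<Longrightarrow> dd v (\<lambda>q. - f q) p = - dd v f p"
  by (rule dd_eqI) (rule DERIV_minus; rule dd_DERIV; assumption)

lemma ex_Basis: "((axis i 1, 0) :: pt) \<in> Basis"
  by (auto simp: Basis_prod_def Basis_vec_def)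
lemma ey_Basis: "((0, axis i 1) :: pt) \<in> Basis"
  by (auto simp: Basis_prod_def Basis_vec_def)

lemma smooth_dif: "smooth_on U f \<Longrightarrow> v \<in> Basis \<Longrightarrow> p \<in> U \<Longrightarrow> dif v f p"
  using sm_dif smooth_sm by blast

lemma smooth_sm2: "smooth_on U f \<Longrightarrow> sm 2 U f" by (rule smooth_sm)

lemma Dop_fun: "Dop lam i f = (\<lambda>p. dd (0, axis i 1) f p - lam * dd (axis i 1, 0) f p)"
  by (rule ext) (simp add: Dop_def px_def py_def)

lemma omega_fun: "omega \<Theta> i k = (\<lambda>p. dd (axis i 1, 0) (dd (0, axis k 1) \<Theta>) p - dd (axis k 1, 0) (dd (0, axis i 1) \<Theta>) p)"
  by (rule ext) (simp add: omega_def px_def py_def)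

lemma smooth_Dop: "open U \<Longrightarrow> smooth_on U f \<Longrightarrow> smooth_on U (Dop lam i f)"
  unfolding Dop_fun
  by (intro smooth_diff smooth_mult smooth_const smooth_dd ex_Basis ey_Basis)

lemma smooth_omega: "open U \<Longrightarrow> smooth_on U \<Theta> \<Longrightarrow> smooth_on U (omega \<Theta> i k)"
  unfolding omega_fun
  by (intro smooth_diff smooth_dd ex_Basis ey_Basis)

lemma Dop_mult:
  assumes "smooth_on U f" "smooth_on U g" "p \<in> U"
  shows "Dop lam j (\<lambda>q. f q * g q) p = f p * Dop lam j g p + Dop lam j f p * g p"
  unfolding Dop_def px_def py_def
  using assms by (simp add: dd_mult smooth_dif ex_Basis ey_Basis algebra_simps)

lemma Dop_add:
  assumes "smooth_on U f" "smooth_on U g" "p \<in> U"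
  shows "Dop lam j (\<lambda>q. f q + g q) p = Dop lam j f p + Dop lam j g p"
  unfolding Dop_def px_def py_def
  using assms by (simp add: dd_add smooth_dif ex_Basis ey_Basis algebra_simps)

lemma Dop_lin3:
  assumes U: "open U" and s: "smooth_on U f1" "smooth_on U g1" "smooth_on U f2" "smooth_on U g2"
    "smooth_on U f3" "smooth_on U g3" and p: "p \<in> U"
  shows "Dop lam j (\<lambda>q. f1 q * g1 q + f2 q * g2 q + f3 q * g3 q) p =
     f1 p * Dop lam j g1 p + Dop lam j f1 p * g1 p + (f2 p * Dop lam j g2 p + Dop lam j f2 p * g2 p)
     + (f3 p * Dop lam j g3 p + Dop lam j f3 p * g3 p)"
proof -
  have m: "smooth_on U (\<lambda>q. f1 q * g1 q)" "smooth_on U (\<lambda>q. f2 q * g2 q)" "smooth_on U (\<lambda>q. f3 q * g3 q)"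
    using U s by (auto intro: smooth_mult)
  have m2: "smooth_on U (\<lambda>q. f1 q * g1 q + f2 q * g2 q)" using U m by (intro smooth_add)
  show ?thesis
    using Dop_add[OF m2 m(3) p, of lam j] Dop_add[OF m(1,2) p, of lam j]
      Dop_mult[OF s(1,2) p] Dop_mult[OF s(3,4) p] Dop_mult[OF s(5,6) p] by simp
qed

lemma Dop_local: "open U \<Longrightarrow> p \<in> U \<Longrightarrow> \<forall>q\<in>U. f q = g q \<Longrightarrow> Dop lam j f p = Dop lam j g p"
  unfolding Dop_def px_def py_def using dd_local[of U p f g] by simp

lemma Dop_const: "Dop lam j (\<lambda>q. c) p = 0"
  unfolding Dop_def px_def py_def by (simp add: dd_const)

lemma omega_anti: "omega \<Theta> k i = (\<lambda>q. - omega \<Theta> i k q)"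
  by (rule ext) (simp add: omega_def)

lemma Dop_omega_anti:
  assumes "open U" "smooth_on U \<Theta>" "p \<in> U"
  shows "Dop lam j (omega \<Theta> k i) p = - Dop lam j (omega \<Theta> i k) p"
proof -
  have so: "smooth_on U (omega \<Theta> i k)" using assms by (intro smooth_omega)
  have a: "dd (0, axis j 1) (\<lambda>q. - omega \<Theta> i k q) p = - dd (0, axis j 1) (omega \<Theta> i k) p"
    by (rule dd_neg[OF smooth_dif[OF so ey_Basis assms(3)]])
  have b: "dd (axis j 1, 0) (\<lambda>q. - omega \<Theta> i k q) p = - dd (axis j 1, 0) (omega \<Theta> i k) p"
    by (rule dd_neg[OF smooth_dif[OF so ex_Basis assms(3)]])
  show ?thesis unfolding omega_anti[of \<Theta> k i] Dop_def px_def py_def a b by simp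
qed

lemma Dop_sym:
  assumes U: "open U" and s: "smooth_on U f" and p: "p \<in> U"
  shows "Dop lam j (Dop lam k f) p = Dop lam k (Dop lam j f) p"
proof -
  let ?x = "\<lambda>i. (axis i 1, 0) :: pt" and ?y = "\<lambda>i. (0, axis i 1) :: pt"
  have e: "Dop lam j (Dop lam k f) p = dd (?y j) (dd (?y k) f) p - lam * dd (?y j) (dd (?x k) f) p
      - lam * (dd (?x j) (dd (?y k) f) p - lam * dd (?x j) (dd (?x k) f) p)" for j k
  proof -
    have sx: "smooth_on U (dd (?x k) f)" and sy: "smooth_on U (dd (?y k) f)"
      using s by (auto intro: smooth_dd ex_Basis ey_Basis)
    have a: "dd (?y j) (\<lambda>p. dd (?y k) f p - lam * dd (?x k) f p) p = dd (?y j) (dd (?y k) f) p - lam * dd (?y j) (dd (?x k) f) p"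
      by (rule dd_lin[OF smooth_dif[OF sy ey_Basis p] smooth_dif[OF sx ey_Basis p]])
    have b: "dd (?x j) (\<lambda>p. dd (?y k) f p - lam * dd (?x k) f p) p = dd (?x j) (dd (?y k) f) p - lam * dd (?x j) (dd (?x k) f) p"
      by (rule dd_lin[OF smooth_dif[OF sy ex_Basis p] smooth_dif[OF sx ex_Basis p]])
    show ?thesis unfolding Dop_def[of lam j] px_def py_def Dop_fun a b ..
  qed
  have c: "dd u (dd v f) p = dd v (dd u f) p" if "u \<in> Basis" "v \<in> Basis" for u v
    using clairaut[OF U smooth_sm2[OF s] that p] .
  have 1: "dd (?y j) (dd (?y k) f) p = dd (?y k) (dd (?y j) f) p" by (rule c; rule ey_Basis)
  have 2: "dd (?x j) (dd (?x k) f) p = dd (?x k) (dd (?x j) f) p" by (rule c; rule ex_Basis)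
  have 3: "dd (?y j) (dd (?x k) f) p = dd (?x k) (dd (?y j) f) p" by (rule c; rule ex_Basis ey_Basis)
  have 4: "dd (?x j) (dd (?y k) f) p = dd (?y k) (dd (?x j) f) p" by (rule c; rule ex_Basis ey_Basis)
  have "Dop lam j (Dop lam k f) p = Dop lam k (Dop lam j f) p \<longleftrightarrow> True"
    apply (subst e[of j k])
    apply (subst e[of k j])
    apply (simp only: 1 2 3 4)
    by (simp add: algebra_simps)
  thus ?thesis by simp
qed

lemma dd_diff: "dif v f p \<Longrightarrow> dif v g p \<Longrightarrow> dd v (\<lambda>q. f q - g q) p = dd v f p - dd v g p"
  by (rule dd_eqI) (rule DERIV_diff; rule dd_DERIV; assumption)

lemma cyclic:
  assumes U: "open U" and s: "smooth_on U \<Theta>" and p: "p \<in> U"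
  shows "Dop lam j (omega \<Theta> i k) p + Dop lam i (omega \<Theta> k j) p + Dop lam k (omega \<Theta> j i) p = 0"
proof -
  let ?x = "\<lambda>i. (axis i 1, 0) :: pt" and ?y = "\<lambda>i. (0, axis i 1) :: pt"
  define g where "g c = dd (?y c) \<Theta>" for c
  have sg: "smooth_on U (g c)" for c unfolding g_def using s by (intro smooth_dd ey_Basis)
  define Y where "Y a b c = dd (?x a) (dd (?y b) (g c)) p" for a b c
  define Z where "Z a b c = dd (?x a) (dd (?x b) (g c)) p" for a b c
  have cl: "dd u (dd v h) q = dd v (dd u h) q" if "smooth_on U h" "u \<in> Basis" "v \<in> Basis" "q \<in> U" for u v h q
    using clairaut[OF U smooth_sm2[OF that(1)] that(2-4)] .
  have Ys: "Y a b c = Y a c b" for a b c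
  proof -
    have "\<forall>q\<in>U. dd (?y b) (g c) q = dd (?y c) (g b) q"
      unfolding g_def using cl[OF s ey_Basis ey_Basis] by blast
    thus ?thesis unfolding Y_def using dd_local[OF U p] by blast
  qed
  have Zs: "Z a b c = Z b a c" for a b c
    unfolding Z_def using cl[OF sg ex_Basis ex_Basis p] by blast
  have om: "omega \<Theta> i k = (\<lambda>q. dd (?x i) (g k) q - dd (?x k) (g i) q)" for i k
    unfolding omega_fun g_def ..
  have D: "Dop lam j (omega \<Theta> i k) p = (Y i j k - Y k j i) - lam * (Z j i k - Z j k i)" for i j k
  proof -
    have "Dop lam j (omega \<Theta> i k) p = dd (?y j) (omega \<Theta> i k) p - lam * dd (?x j) (omega \<Theta> i k) p"
      by (simp add: Dop_def px_def py_def)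
    also have "\<dots> = (dd (?y j) (dd (?x i) (g k)) p - dd (?y j) (dd (?x k) (g i)) p)
        - lam * (dd (?x j) (dd (?x i) (g k)) p - dd (?x j) (dd (?x k) (g i)) p)"
    proof -
      have s1: "smooth_on U (dd (?x i) (g k))" "smooth_on U (dd (?x k) (g i))"
        using sg by (auto intro: smooth_dd ex_Basis)
      show ?thesis unfolding om
        by (simp only: dd_diff[OF smooth_dif[OF s1(1) ey_Basis p] smooth_dif[OF s1(2) ey_Basis p]]
             dd_diff[OF smooth_dif[OF s1(1) ex_Basis p] smooth_dif[OF s1(2) ex_Basis p]])
    qed
    also have "\<dots> = (Y i j k - Y k j i) - lam * (Z j i k - Z j k i)"
      unfolding Y_def Z_def using cl[OF sg ey_Basis ex_Basis p] by simp
    finally show ?thesis .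
  qed
  have "(Y i j k - Y k j i - lam * (Z j i k - Z j k i)) + (Y k i j - Y j i k - lam * (Z i k j - Z i j k))
     + (Y j k i - Y i k j - lam * (Z k j i - Z k i j)) = 0"
    unfolding Ys[of i j k] Ys[of k j i] Ys[of j i k] Zs[of j i k] Zs[of j k i] Zs[of i k j]
    by (simp add: algebra_simps)
  thus ?thesis by (simp only: D)
qed

lemma key:
  fixes w :: "'i \<Rightarrow> 'i \<Rightarrow> real" and d :: "'i \<Rightarrow> 'i \<Rightarrow> 'i \<Rightarrow> real" and e :: "'i \<Rightarrow> real" and s :: "'i \<Rightarrow> 'i \<Rightarrow> real" and x34 x43 y3 y4 :: real
  assumes aw: "w jd ja = - w ja jd"
    and ad1: "d ja jd ja = - d ja ja jd"
    and ad2: "d jb jd ja = - d jb ja jd"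
    and ad3: "d jc jd ja = - d jc ja jd"
    and ad4: "d jd jd ja = - d jd ja jd"
    and ad5: "d jd ja jc = - d jd jc ja"
    and ad6: "d jc jd jb = - d jc jb jd"
    and ss1: "s ja jb = s jb ja"
    and ss2: "s ja jc = s jc ja"
    and ss3: "s ja jd = s jd ja"
    and ss4: "s jb jc = s jc jb"
    and ss5: "s jb jd = s jd jb"
    and ss6: "s jc jd = s jd jc"
    and P: "w ja jb * w jc jd + w jb jc * w ja jd + w jc ja * w jb jd = 0"
    and DP1: "w ja jb * d ja jc jd + d ja ja jb * w jc jd + (w jb jc * d ja ja jd + d ja jb jc * w ja jd) + (w jc ja * d ja jb jd + d ja jc ja * w jb jd) = 0"
    and DP2: "w ja jb * d jb jc jd + d jb ja jb * w jc jd + (w jb jc * d jb ja jd + d jb jb jc * w ja jd) + (w jc ja * d jb jb jd + d jb jc ja * w jb jd) = 0"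
    and DP3: "w ja jb * d jc jc jd + d jc ja jb * w jc jd + (w jb jc * d jc ja jd + d jc jb jc * w ja jd) + (w jc ja * d jc jb jd + d jc jc ja * w jb jd) = 0"
    and DP4: "w ja jb * d jd jc jd + d jd ja jb * w jc jd + (w jb jc * d jd ja jd + d jd jb jc * w ja jd) + (w jc ja * d jd jb jd + d jd jc ja * w jb jd) = 0"
    and cy1: "d ja jb jc + d jb jc ja + d jc ja jb = 0"
    and cy2: "d ja jb jd + d jb jd ja + d jd ja jb = 0"
    and cy3: "d jd ja jc + d ja jc jd + d jc jd ja = 0"
    and cy4: "d jd jb jc + d jb jc jd + d jc jd jb = 0"
    and L1: "x34 = w jb jc * (w jb jd * s ja ja + d ja jb jd * e ja + w jd ja * s ja jb + d ja jd ja * e jb + w ja jb * s ja jd + d ja ja jb * e jd) + w jc ja * (w jb jd * s jb ja + d jb jb jd * e ja + w jd ja * s jb jb + d jb jd ja * e jb + w ja jb * s jb jd + d jb ja jb * e jd) + w ja jb * (w jb jd * s jc ja + d jc jb jd * e ja + w jd ja * s jc jb + d jc jd ja * e jb + w ja jb * s jc jd + d jc ja jb * e jd)"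
    and L2: "x43 = w jb jd * (w jb jc * s ja ja + d ja jb jc * e ja + w jc ja * s ja jb + d ja jc ja * e jb + w ja jb * s ja jc + d ja ja jb * e jc) + w jd ja * (w jb jc * s jb ja + d jb jb jc * e ja + w jc ja * s jb jb + d jb jc ja * e jb + w ja jb * s jb jc + d jb ja jb * e jc) + w ja jb * (w jb jc * s jd ja + d jd jb jc * e ja + w jc ja * s jd jb + d jd jc ja * e jb + w ja jb * s jd jc + d jd ja jb * e jc)"
    and Y3: "y3 = w jb jc * e ja + w jc ja * e jb + w ja jb * e jc"
    and Y4: "y4 = w jb jd * e ja + w jd ja * e jb + w ja jb * e jd"
  shows "w ja jb * (x34 - x43) = (- (w jb jd * d ja ja jb + w jd ja * d jb ja jb + w ja jb * d jd ja jb)) * y3 + (w jb jc * d ja ja jb + w jc ja * d jb ja jb + w ja jb * d jc ja jb) * y4"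
proof -
  have "w ja jb * (x34 - x43) - ((- (w jb jd * d ja ja jb + w jd ja * d jb ja jb + w ja jb * d jd ja jb)) * y3 + (w jb jc * d ja ja jb + w jc ja * d jb ja jb + w ja jb * d jc ja jb) * y4) = 0"
    unfolding L1 L2 Y3 Y4 aw ad1 ad2 ad3 ad4 ss1 ss2 ss3 ss4 ss5 ss6
    using P DP1 DP2 DP3 DP4 cy1 cy2 cy3 cy4 unfolding aw ad1 ad2 ad3 ad4 ad5 ad6
    by algebra
  thus ?thesis by simp
qed

lemma TED_deriv:
  assumes U: "open U" and s: "smooth_on U \<Theta>" and T: "\<forall>q\<in>U. TED \<Theta> q" and p: "p \<in> U"
  shows "omega \<Theta> 1 2 p * Dop lam j (omega \<Theta> 3 4) p + Dop lam j (omega \<Theta> 1 2) p * omega \<Theta> 3 4 p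
    + (omega \<Theta> 2 3 p * Dop lam j (omega \<Theta> 1 4) p + Dop lam j (omega \<Theta> 2 3) p * omega \<Theta> 1 4 p)
    + (omega \<Theta> 3 1 p * Dop lam j (omega \<Theta> 2 4) p + Dop lam j (omega \<Theta> 3 1) p * omega \<Theta> 2 4 p) = 0"
proof -
  have so: "smooth_on U (omega \<Theta> i k)" for i k using U s by (rule smooth_omega)
  have "Dop lam j (\<lambda>q. omega \<Theta> 1 2 q * omega \<Theta> 3 4 q + omega \<Theta> 2 3 q * omega \<Theta> 1 4 q
      + omega \<Theta> 3 1 q * omega \<Theta> 2 4 q) p = Dop lam j (\<lambda>q. 0) p"
    by (rule Dop_local[OF U p]) (use T in \<open>simp add: TED_def\<close>)
  also have "\<dots> = 0" by (rule Dop_const)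
  finally show ?thesis unfolding Dop_lin3[OF U so so so so so so p] .
qed

lemma divfix:
  fixes w L a b y3 y4 :: real
  assumes w: "w \<noteq> 0" and e: "w * L = a * y3 + b * y4"
  shows "L = (a * (1 / w)) * y3 + (b * (1 / w)) * y4"
proof -
  have "L = (w * L) / w" using w by simp
  also have "\<dots> = (a * y3 + b * y4) / w" using e by simp
  also have "\<dots> = (a * (1 / w)) * y3 + (b * (1 / w)) * y4" by (simp add: add_divide_distrib)
  finally show ?thesis .
qed

theorem theorem1:
  fixes U :: "pt set" and \<Theta> :: "pt \<Rightarrow> real" and lam :: real
  assumes "open U"
    and "smooth_on U \<Theta>"
    and "\<forall>p\<in>U. TED \<Theta> p"
    and "\<forall>p\<in>U. omega \<Theta> 1 2 p \<noteq> 0"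
  shows "\<exists>\<alpha> \<beta>. smooth_on U \<alpha> \<and> smooth_on U \<beta> \<and>
           (\<forall>\<psi>. smooth_on U \<psi> \<longrightarrow>
              (\<forall>p\<in>U. X3 \<Theta> lam (X4 \<Theta> lam \<psi>) p - X4 \<Theta> lam (X3 \<Theta> lam \<psi>) p
                      = \<alpha> p * X3 \<Theta> lam \<psi> p + \<beta> p * X4 \<Theta> lam \<psi> p))"
proof -
  note U = assms(1) and sT = assms(2) and T = assms(3) and nz = assms(4)
  have so: "smooth_on U (omega \<Theta> i k)" for i k using U sT by (rule smooth_omega)
  have sDo: "smooth_on U (Dop lam j (omega \<Theta> i k))" for j i k using U so by (rule smooth_Dop)
  define c3 where "c3 = (\<lambda>q. (-1) * (omega \<Theta> 2 4 q * Dop lam 1 (omega \<Theta> 1 2) q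
      + omega \<Theta> 4 1 q * Dop lam 2 (omega \<Theta> 1 2) q + omega \<Theta> 1 2 q * Dop lam 4 (omega \<Theta> 1 2) q))"
  define c4 where "c4 = (\<lambda>q. omega \<Theta> 2 3 q * Dop lam 1 (omega \<Theta> 1 2) q
      + omega \<Theta> 3 1 q * Dop lam 2 (omega \<Theta> 1 2) q + omega \<Theta> 1 2 q * Dop lam 3 (omega \<Theta> 1 2) q)"
  define \<alpha> where "\<alpha> = (\<lambda>q. c3 q * (1 / omega \<Theta> 1 2 q))"
  define \<beta> where "\<beta> = (\<lambda>q. c4 q * (1 / omega \<Theta> 1 2 q))"
  have si: "smooth_on U (\<lambda>q. 1 / omega \<Theta> 1 2 q)" by (rule smooth_inv[OF U so nz])
  have sc3: "smooth_on U c3" unfolding c3_def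
    by (intro smooth_mult[OF U] smooth_add[OF U] smooth_const so sDo)
  have sc4: "smooth_on U c4" unfolding c4_def
    by (intro smooth_mult[OF U] smooth_add[OF U] smooth_const so sDo)
  have sa: "smooth_on U \<alpha>" unfolding \<alpha>_def by (rule smooth_mult[OF U sc3 si])
  have sb: "smooth_on U \<beta>" unfolding \<beta>_def by (rule smooth_mult[OF U sc4 si])
  have main: "X3 \<Theta> lam (X4 \<Theta> lam \<psi>) p - X4 \<Theta> lam (X3 \<Theta> lam \<psi>) p
                      = \<alpha> p * X3 \<Theta> lam \<psi> p + \<beta> p * X4 \<Theta> lam \<psi> p"
    if s\<psi>: "smooth_on U \<psi>" and p: "p \<in> U" for \<psi> p
  proof -
    have sD: "smooth_on U (Dop lam k \<psi>)" for k using U s\<psi> by (rule smooth_Dop)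
    have X4f: "X4 \<Theta> lam \<psi> = (\<lambda>q. omega \<Theta> 2 4 q * Dop lam 1 \<psi> q + omega \<Theta> 4 1 q * Dop lam 2 \<psi> q
                   + omega \<Theta> 1 2 q * Dop lam 4 \<psi> q)"
      by (rule ext) (simp only: X4_def)
    have X3f: "X3 \<Theta> lam \<psi> = (\<lambda>q. omega \<Theta> 2 3 q * Dop lam 1 \<psi> q + omega \<Theta> 3 1 q * Dop lam 2 \<psi> q
                   + omega \<Theta> 1 2 q * Dop lam 3 \<psi> q)"
      by (rule ext) (simp only: X3_def)
    have M4: "Dop lam j (X4 \<Theta> lam \<psi>) p = omega \<Theta> 2 4 p * Dop lam j (Dop lam 1 \<psi>) p + Dop lam j (omega \<Theta> 2 4) p * Dop lam 1 \<psi> p + (omega \<Theta> 4 1 p * Dop lam j (Dop lam 2 \<psi>) p + Dop lam j (omega \<Theta> 4 1) p * Dop lam 2 \<psi> p) + (omega \<Theta> 1 2 p * Dop lam j (Dop lam 4 \<psi>) p + Dop lam j (omega \<Theta> 1 2) p * Dop lam 4 \<psi> p)" for j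
      unfolding X4f by (rule Dop_lin3[OF U so sD so sD so sD p])
    have M3: "Dop lam j (X3 \<Theta> lam \<psi>) p = omega \<Theta> 2 3 p * Dop lam j (Dop lam 1 \<psi>) p + Dop lam j (omega \<Theta> 2 3) p * Dop lam 1 \<psi> p + (omega \<Theta> 3 1 p * Dop lam j (Dop lam 2 \<psi>) p + Dop lam j (omega \<Theta> 3 1) p * Dop lam 2 \<psi> p) + (omega \<Theta> 1 2 p * Dop lam j (Dop lam 3 \<psi>) p + Dop lam j (omega \<Theta> 1 2) p * Dop lam 3 \<psi> p)" for j
      unfolding X3f by (rule Dop_lin3[OF U so sD so sD so sD p])
    have E: "omega \<Theta> 1 2 p * (X3 \<Theta> lam (X4 \<Theta> lam \<psi>) p - X4 \<Theta> lam (X3 \<Theta> lam \<psi>) p)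
       = (- (omega \<Theta> 2 4 p * Dop lam 1 (omega \<Theta> 1 2) p
      + omega \<Theta> 4 1 p * Dop lam 2 (omega \<Theta> 1 2) p + omega \<Theta> 1 2 p * Dop lam 4 (omega \<Theta> 1 2) p)) * X3 \<Theta> lam \<psi> p
      + (omega \<Theta> 2 3 p * Dop lam 1 (omega \<Theta> 1 2) p
      + omega \<Theta> 3 1 p * Dop lam 2 (omega \<Theta> 1 2) p + omega \<Theta> 1 2 p * Dop lam 3 (omega \<Theta> 1 2) p) * X4 \<Theta> lam \<psi> p"
      apply (rule key[where w="\<lambda>i k. omega \<Theta> i k p" and d="\<lambda>j i k. Dop lam j (omega \<Theta> i k) p"
        and e="\<lambda>k. Dop lam k \<psi> p" and s="\<lambda>j k. Dop lam j (Dop lam k \<psi>) p"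
        and ja=1 and jb=2 and jc=3 and jd=4])
      subgoal by (simp add: omega_def)
      subgoal by (rule Dop_omega_anti[OF U sT p])
      subgoal by (rule Dop_omega_anti[OF U sT p])
      subgoal by (rule Dop_omega_anti[OF U sT p])
      subgoal by (rule Dop_omega_anti[OF U sT p])
      subgoal by (rule Dop_omega_anti[OF U sT p])
      subgoal by (rule Dop_omega_anti[OF U sT p])
      subgoal by (rule Dop_sym[OF U s\<psi> p])
      subgoal by (rule Dop_sym[OF U s\<psi> p])
      subgoal by (rule Dop_sym[OF U s\<psi> p])
      subgoal by (rule Dop_sym[OF U s\<psi> p])
      subgoal by (rule Dop_sym[OF U s\<psi> p])
      subgoal by (rule Dop_sym[OF U s\<psi> p])
      subgoal using T p by (simp add: TED_def)
      subgoal by (rule TED_deriv[OF U sT T p])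
      subgoal by (rule TED_deriv[OF U sT T p])
      subgoal by (rule TED_deriv[OF U sT T p])
      subgoal by (rule TED_deriv[OF U sT T p])
      subgoal by (rule cyclic[OF U sT p])
      subgoal by (rule cyclic[OF U sT p])
      subgoal by (rule cyclic[OF U sT p])
      subgoal by (rule cyclic[OF U sT p])
      subgoal by (simp only: X3_def M4 add.assoc)
      subgoal by (simp only: X4_def M3 add.assoc)
      subgoal by (rule X3_def)
      subgoal by (rule X4_def)
      done
    have F: "X3 \<Theta> lam (X4 \<Theta> lam \<psi>) p - X4 \<Theta> lam (X3 \<Theta> lam \<psi>) p
       = ((- (omega \<Theta> 2 4 p * Dop lam 1 (omega \<Theta> 1 2) p
      + omega \<Theta> 4 1 p * Dop lam 2 (omega \<Theta> 1 2) p + omega \<Theta> 1 2 p * Dop lam 4 (omega \<Theta> 1 2) p)) * (1 / omega \<Theta> 1 2 p)) * X3 \<Theta> lam \<psi> p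
      + ((omega \<Theta> 2 3 p * Dop lam 1 (omega \<Theta> 1 2) p
      + omega \<Theta> 3 1 p * Dop lam 2 (omega \<Theta> 1 2) p + omega \<Theta> 1 2 p * Dop lam 3 (omega \<Theta> 1 2) p) * (1 / omega \<Theta> 1 2 p)) * X4 \<Theta> lam \<psi> p"
      by (rule divfix[OF _ E]) (use nz p in blast)
    have c3e: "c3 p = - (omega \<Theta> 2 4 p * Dop lam 1 (omega \<Theta> 1 2) p
      + omega \<Theta> 4 1 p * Dop lam 2 (omega \<Theta> 1 2) p + omega \<Theta> 1 2 p * Dop lam 4 (omega \<Theta> 1 2) p)"
      unfolding c3_def by simp
    show ?thesis using F by (simp only: \<alpha>_def \<beta>_def c3e c4_def)
  qed
  show ?thesis using sa sb main by blast
qed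

end
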